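(* Let $\mathbf{u},\mathbf{v}\in\mathbb{R}^n$ be $k$-sparse unit vectors ($k_{\mathbf{u}}=k_{\mathbf{v}}=k$) following power-law decay profiles with rates $\alpha_{\mathbf{u}},\alpha_{\mathbf{v}}\ge0$, and let $\alpha_{\mathbf{u}\mathbf{v}}=\alpha_{\mathbf{u}}+\alpha_{\mathbf{v}}$. Then, asymptotically in $k$, the sample complexity term $\max_{1\le p\le k} p\, s_{\mathbf{u}}(p)s_{\mathbf{v}}(p)$ governing the Bi-SEP sample size requirement $m\gtrsim \max_{1\le p\le k}p\,s_{\mathbf{u}}(p)s_{\mathbf{v}}(p)\log n$ is of order $k^{\tau}$ with $\tau=\max(1,2-\alpha_{\mathbf{u}\mathbf{v}})$, so the requirement becomes $m\gtrsim k^{\tau}\log n$; except in the boundary case $\{\alpha_{\mathbf{u}},\alpha_{\mathbf{v}}\}=\{0,1\}$, where the term is of order $k\log k$, yielding $m\gtrsim k\log k\log n$.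
   Context: A $k$-sparse unit vector $\mathbf{x}\in\mathbb{R}^n$ follows a power-law decay profile with rate $\alpha\ge0$ if its nonzero entries sorted by magnitude satisfy $x_{(i)}^2\propto i^{-\alpha}$ for $i=1,\dots,k$, normalized so that $\|\mathbf{x}\|_2=1$. Here $x_{(i)}$ denotes the $i$-th largest entry in absolute value. Structure function: $s_{\mathbf{u}}(p)=(\sum_{i=1}^p u_{(i)}^2)^{-1}$, $s_{\mathbf{v}}(p)=(\sum_{i=1}^p v_{(i)}^2)^{-1}$. Bi-SEP is a stagewise SCCA algorithm whose guarantee (under the whitened Gaussian spiked model $\boldsymbol{\Sigma}_{xx}=\boldsymbol{\Sigma}_{yy}=\mathbf{I}_n$, $\boldsymbol{\Sigma}_{xy}=\rho\mathbf{u}\mathbf{v}^\top$) holds when $m\ge C\max_{1\le t\le k}(2t)s_{\mathbf{u}}(t)s_{\mathbf{v}}(t)\log n$ in the balanced case. Notation $a\gtrsim b$ means $a\ge Cb$ for an absolute constant $C>0$; $a\asymp b$ means both directions. *)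

theory Defs
  imports Complex_Main
begin

text \<open>Vectors in R^n are represented as functions nat => real supported on {..<n}.\<close>

definition sorted_sq :: "nat \<Rightarrow> (nat \<Rightarrow> real) \<Rightarrow> real list" where
  "sorted_sq n x = rev (sort (map (\<lambda>j. (x j)^2) [0..<n]))"
  \<comment> \<open>squared magnitudes in non-increasing order: entry i-1 is x_(i)^2\<close>

definition sparse_unit :: "nat \<Rightarrow> nat \<Rightarrow> (nat \<Rightarrow> real) \<Rightarrow> bool" where
  "sparse_unit n k x \<longleftrightarrow> (\<forall>j\<ge>n. x j = 0) \<and> card {j. j < n \<and> x j \<noteq> 0} = k
     \<and> (\<Sum>j<n. (x j)^2) = 1"

definition power_law :: "nat \<Rightarrow> nat \<Rightarrow> real \<Rightarrow> (nat \<Rightarrow> real) \<Rightarrow> bool" where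
  "power_law n k \<alpha> x \<longleftrightarrow>
     (\<exists>c>0. \<forall>i\<in>{1..k}. sorted_sq n x ! (i - 1) = c * real i powr (- \<alpha>))"

definition struct_fun :: "nat \<Rightarrow> (nat \<Rightarrow> real) \<Rightarrow> nat \<Rightarrow> real" where
  "struct_fun n x p = inverse (sum_list (take p (sorted_sq n x)))"

definition sample_term :: "nat \<Rightarrow> (nat \<Rightarrow> real) \<Rightarrow> (nat \<Rightarrow> real) \<Rightarrow> nat \<Rightarrow> real" where
  "sample_term n u v k = Max ((\<lambda>p. real p * struct_fun n u p * struct_fun n v p) ` {1..k})"

end

theory Submission imports Defs "HOL-Analysis.Convex" "HOL-Library.Multiset" begin

definition H :: "real \<Rightarrow> nat \<Rightarrow> real" where
  "H a p = (\<Sum>i=1..p. real i powr (- a))"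

lemma H_Suc: "H a (Suc p) = H a p + real (Suc p) powr (- a)"
  unfolding H_def by simp

lemma H_ge1: "p \<ge> 1 \<Longrightarrow> H a p \<ge> 1"
proof (induction p rule: dec_induct)
  case base then show ?case by (simp add: H_def)
next
  case (step p) then show ?case by (simp add: H_Suc) (smt (verit) powr_ge_zero)
qed

lemma H_lower:
  assumes "a \<ge> 0" "p \<ge> 1"
  shows "real p powr (1 - a) \<le> H a p"
proof -
  have "real p powr (1 - a) = (\<Sum>i=1..p. real p powr (- a))"
    using assms by (simp add: powr_diff powr_minus divide_inverse)
  also have "\<dots> \<le> H a p" unfolding H_def
    by (rule sum_mono) (use assms in \<open>auto intro!: powr_mono2'\<close>)
  finally show ?thesis .
qed

lemma concave_step:
  fixes x r :: real
  assumes "x \<ge> 0" "0 < r" "r \<le> 1"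
  shows "r * (x+1) powr (r-1) \<le> (x+1) powr r - x powr r"
proof (cases "x = 0")
  case True then show ?thesis using assms by simp
next
  case False
  hence x: "x > 0" using assms by simp
  define t where "t = x / (x+1)"
  have "t powr r * 1 powr (1-r) \<le> r*t + (1-r)*1"
    by (rule Youngs_inequality_0) (use assms x in \<open>auto simp: t_def\<close>)
  hence "t powr r \<le> r*t + (1-r)" by simp
  moreover have "t powr r = x powr r / (x+1) powr r" using x by (simp add: t_def powr_divide)
  ultimately have "x powr r \<le> (r*t + (1-r)) * (x+1) powr r"
    using x by (simp add: divide_le_eq)
  also have "\<dots> = (x+1) powr r - r * ((x+1) powr r / (x+1))"
    using x by (simp add: t_def field_simps)
  also have "(x+1) powr r / (x+1) = (x+1) powr (r-1)"
    using x by (simp add: powr_diff)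
  finally show ?thesis by simp
qed

lemma H_small:
  assumes "0 \<le> a" "a < 1"
  shows "H a p \<le> real p powr (1 - a) / (1 - a)"
proof (induction p)
  case 0 then show ?case by (simp add: H_def)
next
  case (Suc p)
  have "(1-a) * (real p + 1) powr ((1-a)-1) \<le> (real p+1) powr (1-a) - real p powr (1-a)"
    by (rule concave_step) (use assms in auto)
  hence "(real p + 1) powr (-a) \<le> ((real p+1) powr (1-a) - real p powr (1-a)) / (1-a)"
    using assms by (simp add: le_divide_eq mult.commute)
  then show ?case using Suc assms
    by (simp add: H_Suc add.commute diff_divide_distrib)
qed

lemma convex_step:
  fixes x s :: real
  assumes "x > 0" "s > 0"
  shows "s * (x+1) powr (-1-s) \<le> x powr (-s) - (x+1) powr (-s)"
proof -
  define t where "t = x / (x+1)"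
  have t: "0 < t" "t < 1" using assms by (auto simp: t_def)
  have "ln t \<le> t - 1" using t by (intro ln_le_minus_one) 
  have "t powr (-s) = exp (- s * ln t)" using t by (simp add: powr_def)
  also have "\<dots> \<ge> 1 + (- s * ln t)" by (rule exp_ge_add_one_self)
  finally have "t powr (-s) \<ge> 1 + (- s * ln t)" .
  moreover have "s * (1 - t) \<le> s * (- ln t)"
    using \<open>ln t \<le> t - 1\<close> assms(2) by (intro mult_left_mono) auto
  ultimately have "t powr (-s) \<ge> 1 + s * (1 - t)" by simp
  moreover have "1 - t = 1/(x+1)" using assms by (simp add: t_def field_simps)
  moreover have "t powr (-s) = x powr (-s) / (x+1) powr (-s)" using assms by (simp add: t_def powr_divide)
  ultimately have "1 + s/(x+1) \<le> x powr (-s) / (x+1) powr (-s)" by simp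
  hence "(1 + s/(x+1)) * (x+1) powr (-s) \<le> x powr (-s)"
    using assms by (simp add: le_divide_eq)
  moreover have "(x+1) powr (-1-s) = (x+1) powr (-s) / (x+1)"
    proof -
    have "(x+1) powr (-1-s) = (x+1) powr (-s - 1)" by (rule arg_cong[where f="\<lambda>e. (x+1) powr e"]) simp
    also have "\<dots> = (x+1) powr (-s) / (x+1)" using assms by (simp add: powr_diff)
    finally show ?thesis .
  qed
  moreover have "(1 + s/(x+1)) * (x+1) powr (-s) = (x+1) powr (-s) + s * ((x+1) powr (-s) / (x+1))"
    by (simp add: distrib_right)
  ultimately show ?thesis by (metis add.commute le_diff_eq)
qed


lemma sorted_sq_facts:
  assumes "sparse_unit n k x"
  shows "length (sorted_sq n x) = n" "sum_list (sorted_sq n x) = 1"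
        "length (filter (\<lambda>v. v \<noteq> 0) (sorted_sq n x)) = k" "k \<le> n"
proof -
  let ?xs = "map (\<lambda>j. (x j)^2) [0..<n]"
  show "length (sorted_sq n x) = n" by (simp add: sorted_sq_def)
  have "sum_list (sorted_sq n x) = sum_list (sort ?xs)" by (simp add: sorted_sq_def sum_list_rev)
  also have "\<dots> = sum_list ?xs" by (metis mset_sort sum_mset_sum_list)
  also have "\<dots> = (\<Sum>j<n. (x j)^2)" by (simp add: sum_list_sum_nth atLeast0LessThan)
  finally show "sum_list (sorted_sq n x) = 1" using assms by (simp add: sparse_unit_def)
  have "length (filter (\<lambda>v. v \<noteq> 0) (sorted_sq n x)) = length (filter (\<lambda>v. v \<noteq> 0) ?xs)"
    by (simp add: sorted_sq_def filter_sort flip: rev_filter)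
  also have "\<dots> = card {j. j < n \<and> x j \<noteq> 0}"
    by (simp add: length_filter_conv_card) (intro arg_cong[where f=card] Collect_cong, auto)
  finally show "length (filter (\<lambda>v. v \<noteq> 0) (sorted_sq n x)) = k" using assms by (simp add: sparse_unit_def)
  have "card {j. j < n \<and> x j \<noteq> 0} \<le> card {..<n}" by (rule card_mono) auto
  then show "k \<le> n" using assms by (simp add: sparse_unit_def)
qed

lemma sum_list_zeros: "\<forall>v\<in>set xs. v = 0 \<Longrightarrow> sum_list xs = (0::real)"
  by (induction xs) auto

lemma reduce:
  assumes su: "sparse_unit n k x" and pl: "power_law n k a x" and p: "1 \<le> p" "p \<le> k"
  shows "struct_fun n x p = H a k / H a p"
proof -
  define L where "L = sorted_sq n x"
  note F = sorted_sq_facts[OF su, folded L_def]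
  obtain c where c: "c > 0" "\<forall>i\<in>{1..k}. L ! (i - 1) = c * real i powr (- a)"
    using pl unfolding power_law_def L_def by blast
  have nth: "L ! i = c * real (Suc i) powr (- a)" if "i < k" for i
    using c(2)[rule_format, of "Suc i"] that by simp
  have tk: "sum_list (take q L) = c * H a q" if "q \<le> k" for q
  proof -
    have lq: "length (take q L) = q" using that F by simp
    have "sum_list (take q L) = (\<Sum>i=0..<length (take q L). take q L ! i)" by (rule sum_list_sum_nth)
    also have "\<dots> = (\<Sum>i=0..<q. L ! i)" unfolding lq by (intro sum.cong) auto
    also have "\<dots> = (\<Sum>i<q. c * real (Suc i) powr (- a))"
      using that by (simp add: atLeast0LessThan nth)
    also have "\<dots> = c * H a q" unfolding H_def
      by (simp only: sum_bounds_lt_plus1[where f="\<lambda>i. c * real i powr (- a)"] sum_distrib_left)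
    finally show ?thesis .
  qed
  have nz: "filter (\<lambda>v. v \<noteq> 0) (take k L) = take k L"
  proof (rule filter_True, rule ballI)
    fix v assume "v \<in> set (take k L)"
    then obtain i where "i < length (take k L)" "v = take k L ! i" by (metis in_set_conv_nth)
    then show "v \<noteq> 0" using nth[of i] c(1) by simp
  qed
  have "length (filter (\<lambda>v. v \<noteq> 0) L) = length (filter (\<lambda>v. v \<noteq> 0) (take k L)) + length (filter (\<lambda>v. v \<noteq> 0) (drop k L))"
    by (metis append_take_drop_id filter_append length_append)
  hence "length (filter (\<lambda>v. v \<noteq> 0) (drop k L)) = 0" using nz F by simp
  hence "\<forall>v\<in>set (drop k L). v = 0" by (simp add: filter_empty_conv)
  hence "sum_list (drop k L) = 0" by (rule sum_list_zeros)
  moreover have "sum_list L = sum_list (take k L) + sum_list (drop k L)"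
    by (metis append_take_drop_id sum_list_append)
  ultimately have ck: "c * H a k = 1" using F tk[of k] by simp
  have c1: "c = 1 / H a k" using ck by (metis eq_divide_eq mult_eq_0_iff zero_neq_one)
  have "struct_fun n x p = inverse (c * H a p)"
    unfolding struct_fun_def L_def[symmetric] using tk p by simp
  also have "\<dots> = H a k / H a p" unfolding c1 by (simp add: divide_inverse mult.commute)
  finally show ?thesis .
qed


lemma H_big_aux:
  assumes "a > 1" "p \<ge> 1"
  shows "H a p \<le> a/(a-1) - real p powr (1-a)/(a-1)"
  using assms(2)
proof (induction p rule: dec_induct)
  case base
  have "a/(a-1) - 1/(a-1) = 1" using assms by (simp add: diff_divide_distrib[symmetric])
  then show ?case using assms by (simp add: H_def)
next
  case (step p)
  have "(a-1) * (real p+1) powr (-1-(a-1)) \<le> real p powr (-(a-1)) - (real p+1) powr (-(a-1))"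
    by (rule convex_step) (use assms step in auto)
  hence "(a-1) * (real p+1) powr (-a) \<le> real p powr (1-a) - (real p+1) powr (1-a)" by simp
  hence "(real p+1) powr (-a) \<le> (real p powr (1-a) - (real p+1) powr (1-a)) / (a-1)"
    using assms by (simp add: le_divide_eq mult.commute)
  then show ?case using step assms
    by (simp add: H_Suc add.commute diff_divide_distrib)
qed

lemma H_big:
  assumes "a > 1" "p \<ge> 1"
  shows "H a p \<le> a/(a-1)"
proof -
  have "0 \<le> real p powr (1-a)/(a-1)" using assms by simp
  thus ?thesis using H_big_aux[OF assms] by linarith
qed

lemma H1_Suc: "H 1 (Suc p) = H 1 p + 1 / real (Suc p)"
  by (simp add: H_Suc powr_minus_divide)

lemma H1_diff:
  assumes "1 \<le> p" "p \<le> k"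
  shows "H 1 k \<le> H 1 p + ln (real k) - ln (real p)"
  using assms(2)
proof (induction k rule: dec_induct)
  case base then show ?case by simp
next
  case (step k)
  have kp: "real k > 0" using step assms by simp
  have "ln (real k / (real k + 1)) \<le> real k / (real k + 1) - 1"
    using kp by (intro ln_le_minus_one) auto
  also have "\<dots> = - (1 / (real k + 1))" using kp by (simp add: field_simps)
  finally have "1 / (real k + 1) \<le> ln (real k + 1) - ln (real k)"
    using kp by (simp add: ln_div)
  then show ?case using step by (simp add: H1_Suc add.commute)
qed

lemma H1_lower: "ln (real k + 1) \<le> H 1 k"
proof (induction k)
  case 0 then show ?case by (simp add: H_def)
next
  case (Suc k)
  have kp: "real k + 1 > 0" by simp
  have "ln ((real k + 2) / (real k + 1)) \<le> (real k + 2) / (real k + 1) - 1"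
    using kp by (intro ln_le_minus_one) auto
  also have "\<dots> = 1 / (real k + 1)" using kp by (simp add: field_simps)
  finally have "ln (real k + 2) - ln (real k + 1) \<le> 1 / (real k + 1)"
    using kp by (simp add: ln_div)
  then show ?case using Suc by (simp add: H1_Suc add.commute)
qed

lemma H_ratio:
  assumes "a \<ge> 0" "1 \<le> p" "p \<le> k"
  shows "real p * H a k \<le> real k * H a p"
proof -
  have split: "{1..k} = {1..p} \<union> {p<..k}" using assms by auto
  define R where "R = (\<Sum>i\<in>{p<..k}. real i powr (-a))"
  have Hk: "H a k = H a p + R" unfolding H_def R_def split
    by (rule sum.union_disjoint) auto
  have "R \<le> (\<Sum>i\<in>{p<..k}. real p powr (-a))" unfolding R_def
    by (rule sum_mono) (use assms in \<open>auto intro!: powr_mono2'\<close>)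
  also have "\<dots> = real (k - p) * real p powr (-a)" by simp
  finally have R: "R \<le> real (k - p) * real p powr (-a)" .
  have "real p * real p powr (-a) \<le> H a p"
    using H_lower[OF assms(1,2)] assms by (simp add: powr_diff powr_minus divide_inverse)
  hence "real p * R \<le> real (k-p) * H a p"
    using R assms by (smt (verit, ccfv_SIG) mult.left_commute mult_left_mono of_nat_0_le_iff)
  hence "real p * H a k \<le> real p * H a p + real (k-p) * H a p" unfolding Hk by (simp add: algebra_simps)
  also have "\<dots> = real k * H a p" using assms by (simp add: of_nat_diff algebra_simps)
  finally show ?thesis .
qed

lemma H_pos: "p \<ge> 1 \<Longrightarrow> H a p > 0" using H_ge1[of p a] by simp

lemma ln_pow:
  fixes y b :: real
  assumes "b > 0" "y \<ge> 1"
  shows "1 + ln y \<le> (1 + 1/b) * y powr b"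
proof -
  have "ln (y powr b) \<le> y powr b - 1" using assms by (intro ln_le_minus_one) auto
  hence "b * ln y \<le> y powr b - 1" using assms by (simp add: ln_powr)
  hence "ln y \<le> (y powr b - 1) / b" using assms by (simp add: le_divide_eq mult.commute)
  moreover have "1 \<le> y powr b" using assms by (simp add: ge_one_powr_ge_zero)
  moreover have "(y powr b - 1)/b = y powr b / b - 1/b" by (simp add: diff_divide_distrib)
  moreover have "(1 + 1/b) * y powr b = y powr b + y powr b / b" by (simp add: distrib_right)
  moreover have "1/b > 0" using assms by simp
  ultimately show ?thesis by argo
qed


definition cond :: "real \<Rightarrow> real \<Rightarrow> bool" where
  "cond a e \<longleftrightarrow> e = 1 \<or> (a < 1 \<and> e = 1 - a) \<or> (a > 1 \<and> e = 0) \<or> (a = 1 \<and> e > 0)"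

lemma ratio_exists:
  assumes a: "a \<ge> 0" and c: "cond a e"
  shows "\<exists>K>0. \<forall>k p. 1 \<le> p \<longrightarrow> p \<le> k \<longrightarrow> H a k / H a p \<le> K * (real k / real p) powr e"
proof -
  have base: "H a k / H a p \<le> real k / real p" if "1 \<le> p" "p \<le> k" for k p
  proof -
    have hp: "H a p > 0" using H_pos[OF that(1)] .
    have pp: "real p > 0" using that by simp
    have "H a k / H a p = (real p * H a k) / (real p * H a p)" using pp by simp
    also have "\<dots> \<le> (real k * H a p) / (real p * H a p)"
      using H_ratio[OF a that] hp pp by (intro divide_right_mono) auto
    also have "\<dots> = real k / real p" using hp by simp
    finally show ?thesis .
  qed
  consider "e = 1" | "a < 1" "e = 1 - a" | "a > 1" "e = 0" | "a = 1" "e > 0"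
    using c unfolding cond_def by blast
  then show ?thesis
  proof cases
    case 1
    show ?thesis by (rule exI[of _ 1]) (use base 1 in auto)
  next
    case 2
    show ?thesis
    proof (rule exI[of _ "1/(1-a)"], safe)
      show "0 < 1/(1-a)" using 2 by simp
      fix k p :: nat assume p: "1 \<le> p" "p \<le> k"
      have "H a k \<le> real k powr (1-a) / (1-a)" by (rule H_small) (use a 2 in auto)
      moreover have "real p powr (1-a) \<le> H a p" by (rule H_lower) (use a p in auto)
      moreover have "real p powr (1-a) > 0" using p by simp
      ultimately have "H a k / H a p \<le> (real k powr (1-a) / (1-a)) / real p powr (1-a)"
        using 2 H_pos[of k a] p by (intro divide_mono) auto
      also have "\<dots> = 1/(1-a) * (real k / real p) powr e" using 2 p by (simp add: powr_divide)
      finally show "H a k / H a p \<le> 1/(1-a) * (real k / real p) powr e" .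
    qed
  next
    case 3
    show ?thesis
    proof (rule exI[of _ "a/(a-1)"], safe)
      show "0 < a/(a-1)" using 3 by simp
      fix k p :: nat assume p: "1 \<le> p" "p \<le> k"
      have "H a k \<le> a/(a-1)" by (rule H_big) (use 3 p in auto)
      moreover have "1 \<le> H a p" by (rule H_ge1) (use p in auto)
      moreover have "H a k \<ge> 0" using H_pos[of k a] p by simp
      ultimately have "H a k / H a p \<le> H a k / 1"
        by (intro divide_left_mono) auto
      hence "H a k / H a p \<le> a/(a-1)" using \<open>H a k \<le> a/(a-1)\<close> by simp
      thus "H a k / H a p \<le> a/(a-1) * (real k / real p) powr e" using 3 p by simp
    qed
  next
    case 4
    show ?thesis
    proof (rule exI[of _ "1 + 1/e"], safe)
      show "0 < 1 + 1/e" using 4 by (simp add: add_pos_pos)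
      fix k p :: nat assume p: "1 \<le> p" "p \<le> k"
      have hk: "H 1 k \<le> H 1 p + ln (real k) - ln (real p)" by (rule H1_diff) (use p in auto)
      have hp: "1 \<le> H 1 p" by (rule H_ge1) (use p in auto)
      have y: "1 \<le> real k / real p" using p by simp
      have lnn: "0 \<le> ln (real k / real p)" using y by simp
      have lk: "ln (real k) - ln (real p) = ln (real k / real p)" using p by (simp add: ln_div)
      have "H 1 k / H 1 p \<le> (H 1 p + ln (real k / real p)) / H 1 p"
        using hk hp lk by (intro divide_right_mono) auto
      also have "\<dots> = 1 + ln (real k / real p) / H 1 p" using hp by (simp add: field_simps)
      also have "\<dots> \<le> 1 + ln (real k / real p)"
      proof -
        have "ln (real k / real p) / H 1 p \<le> ln (real k / real p) / 1"
          using hp lnn by (intro divide_left_mono) auto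
        thus ?thesis by simp
      qed
      also have "\<dots> \<le> (1 + 1/e) * (real k / real p) powr e" by (rule ln_pow) (use 4 y in auto)
      finally show "H a k / H a p \<le> (1 + 1/e) * (real k / real p) powr e" using 4 by simp
    qed
  qed
qed

lemma py_bound:
  assumes p: "1 \<le> p" "p \<le> k" and E: "E \<ge> 0"
  shows "real p * (real k / real p) powr E \<le> real k powr (max 1 E)"
proof (cases "E \<le> 1")
  case True
  have y: "1 \<le> real k / real p" using p by simp
  have "(real k / real p) powr E \<le> (real k / real p) powr 1"
    using y True by (intro powr_mono) auto
  hence "real p * (real k / real p) powr E \<le> real p * (real k / real p)"
    by (intro mult_left_mono) auto
  also have "\<dots> = real k powr (max 1 E)" using True p by simp
  finally show ?thesis .
next
  case False
  have "real p * (real k / real p) powr E = real k powr E * real p powr (1 - E)"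
    using p by (simp add: powr_divide powr_diff)
  also have "\<dots> \<le> real k powr E * 1"
  proof (rule mult_left_mono)
    have "real p powr (1 - E) \<le> real p powr 0" using p False by (intro powr_mono) auto
    thus "real p powr (1 - E) \<le> 1" using p by simp
  qed simp
  finally show ?thesis using False by simp
qed


lemma choose_e:
  assumes a: "a \<ge> 0" and b: "b \<ge> 0" and nb: "\<not> ((a = 0 \<and> b = 1) \<or> (a = 1 \<and> b = 0))"
  shows "\<exists>ea eb. cond a ea \<and> cond b eb \<and> ea \<ge> 0 \<and> eb \<ge> 0 \<and> max 1 (ea+eb) = max 1 (2-(a+b))"
proof (cases "a + b \<le> 1")
  case True
  hence "a < 1" "b < 1" using a b nb by auto
  thus ?thesis using True
    by (intro exI[of _ "1-a"] exI[of _ "1-b"]) (auto simp: cond_def)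
next
  case False
  have m: "max 1 (2-(a+b)) = 1" using False by simp
  consider "a > 1" | "b > 1" | "a < 1" "b < 1" | "a = 1" "b < 1" | "a < 1" "b = 1" | "a = 1" "b = 1"
    by linarith
  then show ?thesis
  proof cases
    case 1 thus ?thesis using m by (intro exI[of _ 0] exI[of _ 1]) (auto simp: cond_def)
  next
    case 2 thus ?thesis using m by (intro exI[of _ 1] exI[of _ 0]) (auto simp: cond_def)
  next
    case 3 thus ?thesis using m False by (intro exI[of _ "1-a"] exI[of _ "1-b"]) (auto simp: cond_def)
  next
    case 4 thus ?thesis using m False by (intro exI[of _ b] exI[of _ "1-b"]) (auto simp: cond_def)
  next
    case 5 thus ?thesis using m False by (intro exI[of _ "1-a"] exI[of _ a]) (auto simp: cond_def)
  next
    case 6 thus ?thesis using m by (intro exI[of _ "1/2"] exI[of _ "1/2"]) (auto simp: cond_def)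
  qed
qed

lemma H0: "H 0 k = real k"
  unfolding H_def by simp

lemma H_one: "H a 1 = 1" unfolding H_def by simp

lemma H_one': "H a (Suc 0) = 1" unfolding H_def by simp

lemma Max_lower:
  assumes "1 \<le> q" "q \<le> k"
  shows "f q \<le> Max (f ` {1..(k::nat)})"
  using assms by (intro Max_ge) auto

lemma Max_upper:
  assumes "1 \<le> k" "\<And>p. 1 \<le> p \<Longrightarrow> p \<le> k \<Longrightarrow> f p \<le> (M::real)"
  shows "Max (f ` {1..(k::nat)}) \<le> M"
  using assms by (intro Max.boundedI) auto


theorem corollary1:
  fixes \<alpha>u \<alpha>v :: real
  assumes "\<alpha>u \<ge> 0" and "\<alpha>v \<ge> 0"
  shows "\<exists>C1 C2 K. C1 > 0 \<and> C2 > 0 \<and>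
    (\<forall>k\<ge>K. \<forall>n u v.
       sparse_unit n k u \<and> sparse_unit n k v \<and> power_law n k \<alpha>u u \<and> power_law n k \<alpha>v v \<longrightarrow>
       (let g = (if {\<alpha>u, \<alpha>v} = {0, 1} then real k * ln (real k)
                 else real k powr (max 1 (2 - (\<alpha>u + \<alpha>v))))
        in C1 * g \<le> sample_term n u v k \<and> sample_term n u v k \<le> C2 * g))"
proof -
  define F where "F k p = real p * (H \<alpha>u k / H \<alpha>u p) * (H \<alpha>v k / H \<alpha>v p)" for k p :: nat
  have red: "sample_term n u v k = Max (F k ` {1..k})"
    if "sparse_unit n k u" "sparse_unit n k v" "power_law n k \<alpha>u u" "power_law n k \<alpha>v v" for n u v k
    unfolding sample_term_def F_def
    by (intro arg_cong[where f=Max] image_cong refl) (simp add: reduce[OF that(1,3)] reduce[OF that(2,4)])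
  have set_iff: "({\<alpha>u, \<alpha>v} = {0, 1}) = ((\<alpha>u = 0 \<and> \<alpha>v = 1) \<or> (\<alpha>u = 1 \<and> \<alpha>v = 0))"
    by (simp add: doubleton_eq_iff)
  show ?thesis
  proof (cases "{\<alpha>u, \<alpha>v} = {0, 1}")
    case True
    hence bd: "(\<alpha>u = 0 \<and> \<alpha>v = 1) \<or> (\<alpha>u = 1 \<and> \<alpha>v = 0)" using set_iff by simp
    have Fk: "F k p = real k * H 1 k / H 1 p" if "1 \<le> p" "p \<le> k" for k p
      using bd that unfolding F_def by (auto simp: H0)
    have F1: "F k 1 = real k * H 1 k" for k
      using bd unfolding F_def by (auto simp: H0 H_one H_one')
    have "\<forall>k\<ge>3. \<forall>n u v.
       sparse_unit n k u \<and> sparse_unit n k v \<and> power_law n k \<alpha>u u \<and> power_law n k \<alpha>v v \<longrightarrow>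
       1 * (real k * ln (real k)) \<le> sample_term n u v k \<and> sample_term n u v k \<le> 2 * (real k * ln (real k))"
    proof (intro allI impI)
      fix k n u v assume k: "3 \<le> k" and h: "sparse_unit n k u \<and> sparse_unit n k v \<and> power_law n k \<alpha>u u \<and> power_law n k \<alpha>v v"
      have st: "sample_term n u v k = Max (F k ` {1..k})" using h red by blast
      have kr: "real k \<ge> 3" using k by simp
      have ln1: "1 \<le> ln (real k)"
      proof -
        have "exp 1 \<le> (3::real)" using exp_le by simp
        also have "\<dots> \<le> real k" using kr .
        finally show ?thesis using ln_ge_iff by (metis exp_gt_zero ln_exp ln_le_cancel_iff order_less_le_trans)
      qed
      have "real k * ln (real k) \<le> real k * H 1 k"
      proof (rule mult_left_mono)
        have "ln (real k) \<le> ln (real k + 1)" using kr by simp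
        thus "ln (real k) \<le> H 1 k" using H1_lower[of k] by linarith
      qed simp
      also have "\<dots> = F k 1" using F1[of k] by simp
      also have "\<dots> \<le> Max (F k ` {1..k})" by (rule Max_lower) (use k in auto)
      finally have lo: "real k * ln (real k) \<le> sample_term n u v k" using st by simp
      have "Max (F k ` {1..k}) \<le> 2 * (real k * ln (real k))"
      proof (rule Max_upper)
        show "1 \<le> k" using k by simp
        fix p assume p: "1 \<le> p" "p \<le> k"
        have hp: "1 \<le> H 1 p" by (rule H_ge1) (use p in auto)
        have hk: "H 1 k \<le> 1 + ln (real k)" using H1_diff[of 1 k] k by (simp add: H_one H_one')
        have hk0: "0 \<le> H 1 k" using H_ge1[of k 1] k by simp
        have "F k p = real k * (H 1 k / H 1 p)" using Fk[OF p] by simp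
        also have "\<dots> \<le> real k * (H 1 k / 1)"
          using hp hk0 by (intro mult_left_mono divide_left_mono) auto
        also have "\<dots> \<le> real k * (2 * ln (real k))"
          using hk ln1 by (intro mult_left_mono) auto
        finally show "F k p \<le> 2 * (real k * ln (real k))" by simp
      qed
      thus "1 * (real k * ln (real k)) \<le> sample_term n u v k \<and> sample_term n u v k \<le> 2 * (real k * ln (real k))"
        using lo st by simp
    qed
    thus ?thesis using True
      by (intro exI[of _ 1] exI[of _ 2] exI[of _ 3]) (simp add: Let_def)
  next
    case False
    hence nb: "\<not> ((\<alpha>u = 0 \<and> \<alpha>v = 1) \<or> (\<alpha>u = 1 \<and> \<alpha>v = 0))" using set_iff by simp
    obtain ea eb where e: "cond \<alpha>u ea" "cond \<alpha>v eb" "ea \<ge> 0" "eb \<ge> 0"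
      "max 1 (ea+eb) = max 1 (2-(\<alpha>u+\<alpha>v))"
      using choose_e[OF assms nb] by blast
    obtain Ka where Ka: "Ka > 0" "\<forall>k p. 1 \<le> p \<longrightarrow> p \<le> k \<longrightarrow> H \<alpha>u k / H \<alpha>u p \<le> Ka * (real k / real p) powr ea"
      using ratio_exists[OF assms(1) e(1)] by blast
    obtain Kb where Kb: "Kb > 0" "\<forall>k p. 1 \<le> p \<longrightarrow> p \<le> k \<longrightarrow> H \<alpha>v k / H \<alpha>v p \<le> Kb * (real k / real p) powr eb"
      using ratio_exists[OF assms(2) e(2)] by blast
    define M where "M = max 1 (2-(\<alpha>u+\<alpha>v))"
    have "\<forall>k\<ge>1. \<forall>n u v.
       sparse_unit n k u \<and> sparse_unit n k v \<and> power_law n k \<alpha>u u \<and> power_law n k \<alpha>v v \<longrightarrow>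
       1 * real k powr M \<le> sample_term n u v k \<and> sample_term n u v k \<le> (Ka * Kb) * real k powr M"
    proof (intro allI impI)
      fix k n u v assume k: "1 \<le> k" and h: "sparse_unit n k u \<and> sparse_unit n k v \<and> power_law n k \<alpha>u u \<and> power_law n k \<alpha>v v"
      have st: "sample_term n u v k = Max (F k ` {1..k})" using h red by blast
      have kr: "real k \<ge> 1" using k by simp
      have l1: "real k powr (2-(\<alpha>u+\<alpha>v)) \<le> Max (F k ` {1..k})"
      proof -
        have "real k powr (2-(\<alpha>u+\<alpha>v)) = real k powr (1-\<alpha>u) * real k powr (1-\<alpha>v)"
        proof -
          have "2-(\<alpha>u+\<alpha>v) = (1-\<alpha>u)+(1-\<alpha>v)" by simp
          hence "real k powr (2-(\<alpha>u+\<alpha>v)) = real k powr ((1-\<alpha>u)+(1-\<alpha>v))" by (rule arg_cong)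
          thus ?thesis by (simp only: powr_add)
        qed
        also have "\<dots> \<le> H \<alpha>u k * H \<alpha>v k"
          using H_lower[OF assms(1) k] H_lower[OF assms(2) k] H_pos[OF k, of \<alpha>u] by (intro mult_mono) auto
        also have "\<dots> = F k 1" by (simp add: F_def H_one H_one')
        also have "\<dots> \<le> Max (F k ` {1..k})" by (rule Max_lower) (use k in auto)
        finally show ?thesis .
      qed
      have l2: "real k powr 1 \<le> Max (F k ` {1..k})"
      proof -
        have "real k powr 1 = F k k" using H_pos[OF k, of \<alpha>u] H_pos[OF k, of \<alpha>v] kr by (simp add: F_def)
        also have "\<dots> \<le> Max (F k ` {1..k})" by (rule Max_lower) (use k in auto)
        finally show ?thesis .
      qed
      have lo: "real k powr M \<le> sample_term n u v k"
        unfolding M_def st by (cases "1 \<le> 2-(\<alpha>u+\<alpha>v)") (use l1 l2 in \<open>auto simp: max_def\<close>)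
      have up: "Max (F k ` {1..k}) \<le> (Ka * Kb) * real k powr M"
      proof (rule Max_upper[OF k])
        fix p assume p: "1 \<le> p" "p \<le> k"
        have ra: "H \<alpha>u k / H \<alpha>u p \<le> Ka * (real k / real p) powr ea" using Ka p by blast
        have rb: "H \<alpha>v k / H \<alpha>v p \<le> Kb * (real k / real p) powr eb" using Kb p by blast
        have pos: "0 \<le> H \<alpha>u k / H \<alpha>u p" "0 \<le> H \<alpha>v k / H \<alpha>v p"
          using H_pos[of p \<alpha>u] H_pos[of k \<alpha>u] H_pos[of p \<alpha>v] H_pos[of k \<alpha>v] p by auto
        have "F k p \<le> real p * (Ka * (real k / real p) powr ea) * (Kb * (real k / real p) powr eb)"
          unfolding F_def using ra rb pos p
          by (intro mult_mono mult_left_mono) (auto intro: mult_nonneg_nonneg)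
        also have "\<dots> = (Ka * Kb) * (real p * (real k / real p) powr (ea + eb))"
          by (simp add: powr_add algebra_simps)
        also have "\<dots> \<le> (Ka * Kb) * real k powr (max 1 (ea+eb))"
          using Ka Kb by (intro mult_left_mono py_bound) (use p e in auto)
        finally show "F k p \<le> (Ka * Kb) * real k powr M" using e(5) by (simp add: M_def)
      qed
      show "1 * real k powr M \<le> sample_term n u v k \<and> sample_term n u v k \<le> (Ka * Kb) * real k powr M"
        using lo up st by simp
    qed
    thus ?thesis using False Ka Kb
      by (intro exI[of _ 1] exI[of _ "Ka * Kb"] exI[of _ 1]) (simp add: Let_def M_def)
  qed
qed

end
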